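(* Let $k\ge1$, $\lambda>0$, $\beta\in[0,\infty]$ and $\mathcal{D}\in\{\mathcal{E},\mathcal{O}\}^k$. For any $\mathcal{D}$-polymer $\gamma=(A_1,\dots,A_k)$, \[ \omega(\gamma) \le \lambda^{\|\gamma\|} \tilde\alpha_k^{\|N(\gamma)\|}, \] where $\|\gamma\|:=\sum_i|A_i|$, $\|N(\gamma)\|:=\sum_i|N(A_i)|$, $\tilde\alpha_k:=\alpha_k^{1/k}$ and $\alpha_k := \frac{1 + ((1+\lambda)^k-1)e^{-\beta}}{(1+\lambda)^k}$.
   Context: $Q_d$ is the hypercube on $\{0,1\}^d$, $\mathcal{E},\mathcal{O}$ its even and odd vertices; $N(U)$ the neighborhood, $[U]:=\{v:N(v)\subset N(U)\}$ the closure; $E(A,B)$ the edges between $A$ and $B$. A polymer is a tuple $\gamma=(A_1,\dots,A_k)$ with each $A_i$ contained in $\mathcal{E}$ or in $\mathcal{O}$, $|[A_i]|\le\frac34 2^{d-1}$, and $H_\gamma$ connected (hence nonempty), where $H_\gamma$ has vertices $(i,u)$, $u\in A_i$, with $(i,u)\sim(j,v)$ iff ($i=j$ and $\mathrm{dist}(u,v)=2$) or ($i\ne j$ and $\mathrm{dist}(u,v)\in\{0,1\}$). A $\mathcal{D}$-polymer additionally has $A_i\subset\mathcal{D}_i$ for all $i$. Its weight is \[ \omega(\gamma):= \sum_{B_i \subset N(A_i)\,\forall i} \frac{\lambda^{\sum_i(|A_i|+|B_i|)}}{(1+\lambda)^{\sum_i|N(A_i)|}} e^{-\beta|E(A_1,B_1)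 \cup \cdots \cup E(A_k,B_k)|}. \] *)

theory Defs
  imports Complex_Main "HOL-Library.FuncSet" "HOL-Library.Extended_Real"
begin

text \<open>Vertices of the hypercube Q_d on {0,1}^d are encoded as subsets of {..<d}
  (the support of the 0/1 vector). Hamming distance is the size of the symmetric difference.\<close>

definition cube_V :: "nat \<Rightarrow> nat set set" where
  "cube_V d = Pow {..<d}"

definition hdist :: "nat set \<Rightarrow> nat set \<Rightarrow> nat" where
  "hdist u v = card ((u - v) \<union> (v - u))"

definition cube_adj :: "nat set \<Rightarrow> nat set \<Rightarrow> bool" where
  "cube_adj u v \<longleftrightarrow> hdist u v = 1"

definition Even_V :: "nat \<Rightarrow> nat set set" where
  "Even_V d = {v \<in> cube_V d. even (card v)}"

definition Odd_V :: "nat \<Rightarrow> nat set set" where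
  "Odd_V d = {v \<in> cube_V d. odd (card v)}"

definition nbhd :: "nat \<Rightarrow> nat set set \<Rightarrow> nat set set" where
  "nbhd d U = {v \<in> cube_V d. \<exists>u\<in>U. cube_adj u v}"

definition closure_cube :: "nat \<Rightarrow> nat set set \<Rightarrow> nat set set" where
  "closure_cube d U = {v \<in> cube_V d. nbhd d {v} \<subseteq> nbhd d U}"

definition edges_between :: "nat set set \<Rightarrow> nat set set \<Rightarrow> nat set set set" where
  "edges_between A B = {{u, v} | u v. u \<in> A \<and> v \<in> B \<and> cube_adj u v}"

definition H_verts :: "nat \<Rightarrow> (nat \<Rightarrow> nat set set) \<Rightarrow> (nat \<times> nat set) set" where
  "H_verts k A = {(i, u). i < k \<and> u \<in> A i}"

definition H_adj :: "(nat \<times> nat set) \<Rightarrow> (nat \<times> nat set) \<Rightarrow> bool" where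
  "H_adj x y \<longleftrightarrow> (fst x = fst y \<and> hdist (snd x) (snd y) = 2)
                 \<or> (fst x \<noteq> fst y \<and> hdist (snd x) (snd y) \<le> 1)"

definition H_connected :: "nat \<Rightarrow> (nat \<Rightarrow> nat set set) \<Rightarrow> bool" where
  "H_connected k A \<longleftrightarrow> H_verts k A \<noteq> {} \<and>
     (\<forall>x\<in>H_verts k A. \<forall>y\<in>H_verts k A.
        (x, y) \<in> ({(a, b). a \<in> H_verts k A \<and> b \<in> H_verts k A \<and> H_adj a b})\<^sup>*)"

definition is_polymer :: "nat \<Rightarrow> nat \<Rightarrow> (nat \<Rightarrow> nat set set) \<Rightarrow> bool" where
  "is_polymer d k A \<longleftrightarrow>
     (\<forall>i<k. (A i \<subseteq> Even_V d \<or> A i \<subseteq> Odd_V d)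
            \<and> real (card (closure_cube d (A i))) \<le> 3 / 4 * 2 ^ (d - 1))
     \<and> H_connected k A"

definition is_D_polymer :: "nat \<Rightarrow> nat \<Rightarrow> (nat \<Rightarrow> nat set set) \<Rightarrow> (nat \<Rightarrow> nat set set) \<Rightarrow> bool" where
  "is_D_polymer d k D A \<longleftrightarrow> is_polymer d k A \<and> (\<forall>i<k. A i \<subseteq> D i)"

definition exp_neg :: "ereal \<Rightarrow> real" where
  "exp_neg \<beta> = (if \<beta> = \<infinity> then 0 else exp (- real_of_ereal \<beta>))"

definition poly_weight :: "nat \<Rightarrow> nat \<Rightarrow> real \<Rightarrow> ereal \<Rightarrow> (nat \<Rightarrow> nat set set) \<Rightarrow> real" where
  "poly_weight d k lam \<beta> A =
     (\<Sum>B \<in> PiE {..<k} (\<lambda>i. Pow (nbhd d (A i))).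
        lam ^ (\<Sum>i<k. card (A i) + card (B i)) / (1 + lam) ^ (\<Sum>i<k. card (nbhd d (A i)))
        * exp_neg \<beta> ^ card (\<Union>i<k. edges_between (A i) (B i)))"

definition alpha_k :: "nat \<Rightarrow> real \<Rightarrow> ereal \<Rightarrow> real" where
  "alpha_k k lam \<beta> = (1 + ((1 + lam) ^ k - 1) * exp_neg \<beta>) / (1 + lam) ^ k"

end

theory Submission imports Defs "HOL-Analysis.Analysis" begin

definition mu :: "real \<Rightarrow> 'e set \<Rightarrow> 'e set \<Rightarrow> real" where
  "mu x Ed W = x ^ card W * (1 - x) ^ card (Ed - W)"

lemma mu_nonneg: "0 \<le> x \<Longrightarrow> x \<le> 1 \<Longrightarrow> 0 \<le> mu x Ed W"
  by (simp add: mu_def)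

lemma sub_ident:
  fixes x :: real assumes fin: "finite Ed" and sub: "S \<subseteq> Ed"
  shows "(\<Sum>W\<in>Pow Ed. if S \<subseteq> W then mu x Ed W else 0) = x ^ card S"
proof -
  have "(\<Prod>e\<in>Ed. x + (if e \<in> S then 0 else 1 - x))
     = (\<Sum>W\<in>Pow Ed. (\<Prod>e\<in>W. x) * (\<Prod>e\<in>Ed-W. if e \<in> S then 0 else 1 - x))"
    by (rule prod_add[OF fin])
  also have "\<dots> = (\<Sum>W\<in>Pow Ed. if S \<subseteq> W then mu x Ed W else 0)"
  proof (rule sum.cong[OF refl])
    fix W assume W: "W \<in> Pow Ed"
    show "(\<Prod>e\<in>W. x) * (\<Prod>e\<in>Ed-W. if e \<in> S then 0 else 1 - x) = (if S \<subseteq> W then mu x Ed W else 0)"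
    proof (cases "S \<subseteq> W")
      case True
      then have "(\<Prod>e\<in>Ed-W. if e \<in> S then 0 else 1 - x) = (\<Prod>e\<in>Ed-W. 1 - x)"
        by (intro prod.cong) auto
      then show ?thesis using True by (simp add: mu_def)
    next
      case False
      then obtain e where e: "e \<in> S" "e \<notin> W" by auto
      then have "e \<in> Ed - W" using sub by auto
      then have "(\<Prod>e\<in>Ed-W. if e \<in> S then 0 else 1 - x) = 0"
        using e fin by (intro prod_zero) auto
      then show ?thesis using False by simp
    qed
  qed
  finally have eq: "(\<Prod>e\<in>Ed. x + (if e \<in> S then 0 else 1 - x)) = (\<Sum>W\<in>Pow Ed. if S \<subseteq> W then mu x Ed W else 0)" .
  have "(\<Prod>e\<in>Ed. x + (if e \<in> S then 0 else 1 - x)) = (\<Prod>e\<in>Ed. if e \<in> S then x else 1)"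
    by (intro prod.cong) auto
  also have "\<dots> = (\<Prod>e\<in>Ed \<inter> {e. e \<in> S}. x) * (\<Prod>e\<in>Ed \<inter> - {e. e \<in> S}. 1)"
    using fin by (rule prod.If_cases)
  also have "Ed \<inter> {e. e \<in> S} = S" using sub by auto
  finally show ?thesis using eq by simp
qed

lemma pow_binom:
  fixes a :: real assumes "finite N"
  shows "(\<Sum>C\<in>Pow N. a ^ card C) = (1 + a) ^ card N"
  using prod_add[OF assms, of "\<lambda>_. a" "\<lambda>_. 1"] by (simp add: add.commute)

lemma powr_k_inv:
  fixes p :: real assumes "p \<ge> 0" "k \<ge> 1"
  shows "(p ^ k) powr (1 / real k) = p"
proof (cases "p = 0")
  case True then show ?thesis using assms by simp
next
  case False
  then have "p > 0" using assms by simp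
  then have "(p ^ k) powr (1 / real k) = (p powr real k) powr (1 / real k)"
    by (simp add: powr_realpow)
  also have "\<dots> = p" using assms \<open>p > 0\<close> by (simp add: powr_powr)
  finally show ?thesis .
qed

lemma amgm_k:
  fixes y :: "nat \<Rightarrow> real"
  assumes k: "k \<ge> 1" and y: "\<And>i. i < k \<Longrightarrow> y i \<ge> 0"
  shows "(\<Prod>i<k. y i) \<le> (\<Sum>i<k. (y i) ^ k) / k"
proof -
  have "(\<Prod>i\<in>{..<k}. y i ^ k) powr (1 / card {..<k}) \<le> (\<Sum>i\<in>{..<k}. y i ^ k / card {..<k})"
    using k y by (intro arith_geom_mean) (auto simp: lessThan_empty_iff)
  moreover have "(\<Prod>i\<in>{..<k}. y i ^ k) = (\<Prod>i<k. y i) ^ k"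
    by (simp add: prod_power_distrib)
  moreover have "(\<Sum>i\<in>{..<k}. y i ^ k / card {..<k}) = (\<Sum>i<k. (y i) ^ k) / k"
    by (simp add: sum_divide_distrib)
  moreover have "((\<Prod>i<k. y i) ^ k) powr (1 / real k) = (\<Prod>i<k. y i)"
    using k y by (intro powr_k_inv prod_nonneg) auto
  ultimately show ?thesis by simp
qed


lemma abstract_bound:
  fixes N :: "nat \<Rightarrow> 'v set" and E :: "nat \<Rightarrow> 'v set \<Rightarrow> 'e set" and x lam :: real
  assumes k: "k \<ge> 1" and lam: "lam \<ge> 0" and x0: "0 \<le> x" and x1: "x \<le> 1"
    and finN: "\<And>i. i < k \<Longrightarrow> finite (N i)"
    and Eun: "\<And>i B. i < k \<Longrightarrow> B \<subseteq> N i \<Longrightarrow> E i B = (\<Union>v\<in>B. E i {v})"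
    and finE: "\<And>i v. i < k \<Longrightarrow> v \<in> N i \<Longrightarrow> finite (E i {v})"
    and Ecard: "\<And>i C. i < k \<Longrightarrow> C \<subseteq> N i \<Longrightarrow> card C \<le> card (E i C)"
  shows "(\<Sum>B\<in>PiE {..<k} (\<lambda>i. Pow (N i)). lam ^ (\<Sum>i<k. card (B i)) * x ^ card (\<Union>i<k. E i (B i)))
          \<le> ((1 + ((1+lam)^k - 1) * x) powr (1 / real k)) ^ (\<Sum>i<k. card (N i))"
proof -
  define r where "r = (1 + ((1+lam)^k - 1) * x) powr (1 / real k)"
  define M where "M = (1+lam)^k - (1::real)"
  have M0: "M \<ge> 0" unfolding M_def using lam by simp
  have LkM: "(1+lam)^k = 1 + M" unfolding M_def by simp
  define Ed where "Ed = (\<Union>i<k. E i (N i))"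
  have finEi: "finite (E i B)" if "i < k" "B \<subseteq> N i" for i B
  proof -
    have "finite B" using finN[OF that(1)] that(2) finite_subset by blast
    then show ?thesis using Eun[OF that] finE that by auto
  qed
  have finEd: "finite Ed" unfolding Ed_def using finEi by auto
  have EsubEd: "E i B \<subseteq> Ed" if "i < k" "B \<subseteq> N i" for i B
    using Eun[OF that] Eun[OF that(1) order_refl] that unfolding Ed_def by blast
  define good where "good i W = {v \<in> N i. E i {v} \<subseteq> W}" for i W
  have goodsub: "good i W \<subseteq> N i" for i W unfolding good_def by auto
  have fingood: "finite (good i W)" if "i < k" for i W
    using finN[OF that] goodsub finite_subset by blast
  have goodiff: "(E i B \<subseteq> W) = (B \<subseteq> good i W)" if "i < k" "B \<subseteq> N i" for i B W
    using Eun[OF that] that unfolding good_def by auto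
  define n where "n = (\<Sum>i<k. card (N i))"
  have q1: "1 + M * x \<ge> 1" using M0 x0 by simp
  have rpos: "r > 0" unfolding r_def M_def[symmetric] using q1 by simp
  have rk: "r ^ k = 1 + M * x"
  proof -
    have "r ^ k = r powr real k" using rpos by (simp add: powr_realpow)
    also have "\<dots> = 1 + M * x" unfolding r_def M_def[symmetric] using q1 k by (simp add: powr_powr)
    finally show ?thesis .
  qed
  define G where "G i W = (1+lam) ^ card (good i W)" for i W
  define LHS where "LHS = (\<Sum>B\<in>PiE {..<k} (\<lambda>i. Pow (N i)). lam ^ (\<Sum>i<k. card (B i)) * x ^ card (\<Union>i<k. E i (B i)))"
  have finPi: "finite (PiE {..<k} (\<lambda>i. Pow (N i)))" using finN by (intro finite_PiE) auto
  have Z_eq: "LHS = (\<Sum>W\<in>Pow Ed. mu x Ed W * (\<Prod>i<k. G i W))"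
  proof -
    have "LHS = (\<Sum>B\<in>PiE {..<k} (\<lambda>i. Pow (N i)). lam ^ (\<Sum>i<k. card (B i)) *
                   (\<Sum>W\<in>Pow Ed. if (\<Union>i<k. E i (B i)) \<subseteq> W then mu x Ed W else 0))"
      unfolding LHS_def
    proof (rule sum.cong[OF refl])
      fix B assume B: "B \<in> PiE {..<k} (\<lambda>i. Pow (N i))"
      have "(\<Union>i<k. E i (B i)) \<subseteq> Ed" using B EsubEd by (auto simp: PiE_iff)
      then show "lam ^ (\<Sum>i<k. card (B i)) * x ^ card (\<Union>i<k. E i (B i)) =
           lam ^ (\<Sum>i<k. card (B i)) * (\<Sum>W\<in>Pow Ed. if (\<Union>i<k. E i (B i)) \<subseteq> W then mu x Ed W else 0)"
        by (simp add: sub_ident finEd)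
    qed
    also have "\<dots> = (\<Sum>B\<in>PiE {..<k} (\<lambda>i. Pow (N i)). \<Sum>W\<in>Pow Ed.
                   (if (\<Union>i<k. E i (B i)) \<subseteq> W then lam ^ (\<Sum>i<k. card (B i)) * mu x Ed W else 0))"
      by (simp add: sum_distrib_left if_distrib cong: if_cong)
    also have "\<dots> = (\<Sum>W\<in>Pow Ed. \<Sum>B\<in>PiE {..<k} (\<lambda>i. Pow (N i)).
                   (if (\<Union>i<k. E i (B i)) \<subseteq> W then lam ^ (\<Sum>i<k. card (B i)) * mu x Ed W else 0))"
      by (rule sum.swap)
    also have "\<dots> = (\<Sum>W\<in>Pow Ed. mu x Ed W * (\<Prod>i<k. G i W))"
    proof (rule sum.cong[OF refl])
      fix W assume W: "W \<in> Pow Ed"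
      have "(\<Sum>B\<in>PiE {..<k} (\<lambda>i. Pow (N i)).
                   (if (\<Union>i<k. E i (B i)) \<subseteq> W then lam ^ (\<Sum>i<k. card (B i)) * mu x Ed W else 0))
          = (\<Sum>B\<in>PiE {..<k} (\<lambda>i. Pow (N i)).
                   (if (\<forall>i<k. B i \<subseteq> good i W) then (\<Prod>i<k. lam ^ card (B i)) * mu x Ed W else 0))"
      proof (rule sum.cong[OF refl])
        fix B assume B: "B \<in> PiE {..<k} (\<lambda>i. Pow (N i))"
        have ei: "(E i (B i) \<subseteq> W) = (B i \<subseteq> good i W)" if "i < k" for i
        proof -
          have "B i \<subseteq> N i" using B that by (auto simp: PiE_iff)
          then show ?thesis using goodiff that by blast
        qed
        have "((\<Union>i<k. E i (B i)) \<subseteq> W) = (\<forall>i<k. E i (B i) \<subseteq> W)" by auto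
        also have "\<dots> = (\<forall>i<k. B i \<subseteq> good i W)" using ei by auto
        finally have "((\<Union>i<k. E i (B i)) \<subseteq> W) = (\<forall>i<k. B i \<subseteq> good i W)" .
        then show "(if (\<Union>i<k. E i (B i)) \<subseteq> W then lam ^ (\<Sum>i<k. card (B i)) * mu x Ed W else 0) =
          (if (\<forall>i<k. B i \<subseteq> good i W) then (\<Prod>i<k. lam ^ card (B i)) * mu x Ed W else 0)"
          by (simp only: power_sum)
      qed
      also have "\<dots> = (\<Sum>B\<in>{B \<in> PiE {..<k} (\<lambda>i. Pow (N i)). \<forall>i<k. B i \<subseteq> good i W}.
                         (\<Prod>i<k. lam ^ card (B i)) * mu x Ed W)"
        using finPi by (simp add: sum.inter_filter)
      also have "{B \<in> PiE {..<k} (\<lambda>i. Pow (N i)). \<forall>i<k. B i \<subseteq> good i W} = PiE {..<k} (\<lambda>i. Pow (good i W))"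
      proof (intro set_eqI iffI)
        fix B assume "B \<in> {B \<in> PiE {..<k} (\<lambda>i. Pow (N i)). \<forall>i<k. B i \<subseteq> good i W}"
        then show "B \<in> PiE {..<k} (\<lambda>i. Pow (good i W))" by (simp add: PiE_iff)
      next
        fix B assume B: "B \<in> PiE {..<k} (\<lambda>i. Pow (good i W))"
        then have "\<forall>i<k. B i \<subseteq> good i W" by (simp add: PiE_iff)
        moreover have "\<forall>i<k. B i \<subseteq> N i" using calculation goodsub by blast
        ultimately show "B \<in> {B \<in> PiE {..<k} (\<lambda>i. Pow (N i)). \<forall>i<k. B i \<subseteq> good i W}"
          using B by (simp add: PiE_iff)
      qed
      also have "(\<Sum>B\<in>PiE {..<k} (\<lambda>i. Pow (good i W)). (\<Prod>i<k. lam ^ card (B i)) * mu x Ed W)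
           = mu x Ed W * (\<Sum>B\<in>PiE {..<k} (\<lambda>i. Pow (good i W)). (\<Prod>i<k. lam ^ card (B i)))"
        by (simp add: sum_distrib_left mult.commute)
      also have "(\<Sum>B\<in>PiE {..<k} (\<lambda>i. Pow (good i W)). (\<Prod>i<k. lam ^ card (B i)))
           = (\<Prod>i<k. \<Sum>b\<in>Pow (good i W). lam ^ card b)"
        using fingood by (intro prod_sum_PiE[symmetric]) auto
      also have "\<dots> = (\<Prod>i<k. G i W)"
        unfolding G_def using fingood by (intro prod.cong refl) (simp add: pow_binom)
      finally show "(\<Sum>B\<in>PiE {..<k} (\<lambda>i. Pow (N i)).
                   (if (\<Union>i<k. E i (B i)) \<subseteq> W then lam ^ (\<Sum>i<k. card (B i)) * mu x Ed W else 0))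
           = mu x Ed W * (\<Prod>i<k. G i W)" .
    qed
    finally show ?thesis .
  qed
  define y where "y i W = G i W / r ^ card (N i)" for i W
  have step3: "(\<Prod>i<k. G i W) \<le> r ^ n * ((\<Sum>i<k. (y i W) ^ k) / k)" for W
  proof -
    have "(\<Prod>i<k. y i W) \<le> (\<Sum>i<k. (y i W) ^ k) / k"
      using k rpos lam by (intro amgm_k) (auto simp: y_def G_def)
    moreover have "(\<Prod>i<k. G i W) = r ^ n * (\<Prod>i<k. y i W)"
      using rpos unfolding y_def n_def by (simp add: prod_dividef power_sum)
    ultimately show ?thesis using rpos
      by (metis mult_left_mono zero_le_power less_imp_le)
  qed
  have step4: "(\<Sum>W\<in>Pow Ed. mu x Ed W * (y i W) ^ k) \<le> 1" if i: "i < k" for i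
  proof -
    have "(\<Sum>W\<in>Pow Ed. mu x Ed W * (1 + M) ^ card (good i W))
        = (\<Sum>W\<in>Pow Ed. mu x Ed W * (\<Sum>C\<in>Pow (good i W). M ^ card C))"
      using fingood[OF i] by (simp add: pow_binom)
    also have "\<dots> = (\<Sum>W\<in>Pow Ed. \<Sum>C\<in>Pow (N i). if C \<subseteq> good i W then M ^ card C * mu x Ed W else 0)"
    proof (rule sum.cong[OF refl])
      fix W
      have eqP: "Pow (good i W) = {C \<in> Pow (N i). C \<subseteq> good i W}" using goodsub by auto
      have "(\<Sum>C\<in>Pow (good i W). M ^ card C) = (\<Sum>C\<in>Pow (N i). if C \<subseteq> good i W then M ^ card C else 0)"
        using finN[OF i] by (simp only: eqP sum.inter_filter finite_Pow_iff)
      then show "mu x Ed W * (\<Sum>C\<in>Pow (good i W). M ^ card C) =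
          (\<Sum>C\<in>Pow (N i). if C \<subseteq> good i W then M ^ card C * mu x Ed W else 0)"
        by (simp add: sum_distrib_left if_distrib mult.commute cong: if_cong)
    qed
    also have "\<dots> = (\<Sum>C\<in>Pow (N i). \<Sum>W\<in>Pow Ed. if C \<subseteq> good i W then M ^ card C * mu x Ed W else 0)"
      by (rule sum.swap)
    also have "\<dots> = (\<Sum>C\<in>Pow (N i). M ^ card C * x ^ card (E i C))"
    proof (rule sum.cong[OF refl])
      fix C assume C: "C \<in> Pow (N i)"
      have "(\<Sum>W\<in>Pow Ed. if C \<subseteq> good i W then M ^ card C * mu x Ed W else 0)
          = (\<Sum>W\<in>Pow Ed. M ^ card C * (if E i C \<subseteq> W then mu x Ed W else 0))"
        using goodiff[OF i] C by (intro sum.cong refl) auto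
      also have "\<dots> = M ^ card C * x ^ card (E i C)"
        using EsubEd[OF i] C finEd by (simp add: sum_distrib_left[symmetric] sub_ident)
      finally show "(\<Sum>W\<in>Pow Ed. if C \<subseteq> good i W then M ^ card C * mu x Ed W else 0) = M ^ card C * x ^ card (E i C)" .
    qed
    also have "\<dots> \<le> (\<Sum>C\<in>Pow (N i). (M * x) ^ card C)"
    proof (rule sum_mono)
      fix C assume C: "C \<in> Pow (N i)"
      have "x ^ card (E i C) \<le> x ^ card C"
        using Ecard[OF i] C x0 x1 by (intro power_decreasing) auto
      then show "M ^ card C * x ^ card (E i C) \<le> (M * x) ^ card C"
        using M0 by (simp add: power_mult_distrib mult_left_mono)
    qed
    also have "\<dots> = (1 + M * x) ^ card (N i)" using finN[OF i] by (simp add: pow_binom)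
    finally have A: "(\<Sum>W\<in>Pow Ed. mu x Ed W * (1 + M) ^ card (good i W)) \<le> (1 + M * x) ^ card (N i)" .
    have "(\<Sum>W\<in>Pow Ed. mu x Ed W * (y i W) ^ k)
        = (\<Sum>W\<in>Pow Ed. mu x Ed W * (1 + M) ^ card (good i W)) / (1 + M * x) ^ card (N i)"
    proof -
      have "(y i W) ^ k = (1 + M) ^ card (good i W) / (1 + M * x) ^ card (N i)" for W
        unfolding y_def G_def
        by (simp add: power_divide LkM[symmetric] rk[symmetric] power_mult[symmetric] mult.commute)
      then show ?thesis by (simp add: sum_divide_distrib)
    qed
    also have "\<dots> \<le> 1" using A q1 by simp
    finally show ?thesis .
  qed
  have "LHS \<le> (\<Sum>W\<in>Pow Ed. mu x Ed W * (r ^ n * ((\<Sum>i<k. (y i W) ^ k) / k)))"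
    unfolding Z_eq using step3 mu_nonneg[OF x0 x1] by (intro sum_mono mult_left_mono) auto
  also have "\<dots> = r ^ n / k * (\<Sum>i<k. \<Sum>W\<in>Pow Ed. mu x Ed W * (y i W) ^ k)"
    by (simp add: sum_distrib_left sum_divide_distrib sum.swap[of _ "Pow Ed"] algebra_simps)
  also have "\<dots> \<le> r ^ n / k * (\<Sum>i<k. 1)"
    using step4 rpos by (intro mult_left_mono sum_mono) auto
  also have "\<dots> = r ^ n" using k by simp
  finally show ?thesis unfolding LHS_def r_def n_def .
qed


lemma adj_parity:
  assumes "cube_adj u v" "finite u" "finite v"
  shows "even (card u) \<noteq> even (card v)"
proof -
  have h: "card ((u - v) \<union> (v - u)) = 1" using assms(1) by (simp add: cube_adj_def hdist_def)
  have "card ((u - v) \<union> (v - u)) = card (u - v) + card (v - u)"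
    using assms by (intro card_Un_disjoint) auto
  moreover have "card u = card (u \<inter> v) + card (u - v)"
    using assms by (metis card_Int_Diff)
  moreover have "card v = card (u \<inter> v) + card (v - u)"
    using assms by (metis card_Int_Diff Int_commute)
  ultimately show ?thesis using h by presburger
qed

lemma edges_union: "edges_between A B = (\<Union>v\<in>B. edges_between A {v})"
  unfolding edges_between_def by auto

lemma edges_finite:
  assumes "finite A" "finite B" shows "finite (edges_between A B)"
proof -
  have "edges_between A B \<subseteq> (\<lambda>(u, v). {u, v}) ` (A \<times> B)"
    unfolding edges_between_def by auto
  then show ?thesis using assms finite_subset by blast
qed

lemma cubeV_finite: "v \<in> cube_V d \<Longrightarrow> finite v"
  unfolding cube_V_def using finite_subset by auto

lemma nbhd_sub: "nbhd d U \<subseteq> cube_V d" unfolding nbhd_def by auto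

lemma finite_cube_V: "finite (cube_V d)" unfolding cube_V_def by simp

lemma edges_card:
  assumes A: "A \<subseteq> Even_V d \<or> A \<subseteq> Odd_V d" and C: "C \<subseteq> nbhd d A"
  shows "card C \<le> card (edges_between A C)"
proof -
  have Acube: "A \<subseteq> cube_V d" using A by (auto simp: Even_V_def Odd_V_def)
  have finA: "finite A" by (rule finite_subset[OF Acube finite_cube_V])
  have finC: "finite C" by (rule finite_subset[OF subset_trans[OF C nbhd_sub] finite_cube_V])
  define g where "g v = (SOME u. u \<in> A \<and> cube_adj u v)" for v
  define f where "f v = {g v, v}" for v
  have su: "g v \<in> A \<and> cube_adj (g v) v" if "v \<in> C" for v
  proof -
    have "\<exists>u. u \<in> A \<and> cube_adj u v" using C that unfolding nbhd_def by auto
    then show ?thesis unfolding g_def by (rule someI_ex)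
  qed
  have notA: "v \<notin> A" if "v \<in> C" for v
  proof
    assume vA: "v \<in> A"
    have uA: "g v \<in> A" and adj: "cube_adj (g v) v" using su[OF that] by auto
    have "finite (g v)" "finite v" using uA vA Acube cubeV_finite by auto
    then have "even (card (g v)) \<noteq> even (card v)" using adj_parity[OF adj] by blast
    moreover have "even (card (g v)) = even (card v)"
      using A uA vA by (auto simp: Even_V_def Odd_V_def)
    ultimately show False by simp
  qed
  have "inj_on f C"
  proof (rule inj_onI)
    fix v w assume v: "v \<in> C" and w: "w \<in> C" and eq: "f v = f w"
    show "v = w"
    proof (rule ccontr)
      assume ne: "v \<noteq> w"
      have "{g v, v} = {g w, w}" using eq unfolding f_def .
      then have "v = g w" using ne by (metis doubleton_eq_iff)
      then have "v \<in> A" using su[OF w] by simp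
      then show False using notA[OF v] by simp
    qed
  qed
  moreover have "f ` C \<subseteq> edges_between A C"
  proof
    fix e assume "e \<in> f ` C"
    then obtain v where v: "v \<in> C" and e: "e = {g v, v}" unfolding f_def by blast
    have "g v \<in> A" "cube_adj (g v) v" using su[OF v] by auto
    then show "e \<in> edges_between A C" unfolding edges_between_def e using v by blast
  qed
  moreover have "finite (edges_between A C)" using edges_finite finA finC by blast
  ultimately show ?thesis by (rule card_inj_on_le)
qed

lemma exp_neg_bounds:
  assumes "\<beta> \<ge> 0" shows "0 \<le> exp_neg \<beta>" "exp_neg \<beta> \<le> 1"
proof -
  show "0 \<le> exp_neg \<beta>" by (simp add: exp_neg_def)
  show "exp_neg \<beta> \<le> 1"
  proof (cases "\<beta> = \<infinity>")
    case True then show ?thesis by (simp add: exp_neg_def)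
  next
    case False
    have "real_of_ereal \<beta> \<ge> 0" using assms by (simp add: real_of_ereal_pos)
    then show ?thesis using False by (simp add: exp_neg_def)
  qed
qed

theorem lemma4p5:
  fixes d k :: nat and lam :: real and \<beta> :: ereal
    and D A :: "nat \<Rightarrow> nat set set"
  assumes "k \<ge> 1" and "lam > 0" and "\<beta> \<ge> 0"
    and "\<forall>i<k. D i = Even_V d \<or> D i = Odd_V d"
    and "is_D_polymer d k D A"
  shows "poly_weight d k lam \<beta> A
           \<le> lam ^ (\<Sum>i<k. card (A i))
             * (alpha_k k lam \<beta> powr (1 / real k)) ^ (\<Sum>i<k. card (nbhd d (A i)))"
proof -
  define x where "x = exp_neg \<beta>"
  have x0: "0 \<le> x" and x1: "x \<le> 1" using exp_neg_bounds[OF assms(3)] unfolding x_def by auto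
  have Apar: "A i \<subseteq> Even_V d \<or> A i \<subseteq> Odd_V d" if "i < k" for i
    using assms(5) that unfolding is_D_polymer_def is_polymer_def by blast
  have finA: "finite (A i)" if "i < k" for i
  proof -
    have "A i \<subseteq> cube_V d" using Apar[OF that] by (auto simp: Even_V_def Odd_V_def)
    then show ?thesis using finite_cube_V by (rule finite_subset)
  qed
  have finN: "finite (nbhd d (A i))" for i by (rule finite_subset[OF nbhd_sub finite_cube_V])
  define L where "L = 1 + lam"
  have Lpos: "L > 0" using assms(2) unfolding L_def by simp
  define r where "r = (1 + ((1+lam)^k - 1) * x) powr (1 / real k)"
  define n where "n = (\<Sum>i<k. card (nbhd d (A i)))"
  define a where "a = (\<Sum>i<k. card (A i))"
  define Z where "Z = (\<Sum>B\<in>PiE {..<k} (\<lambda>i. Pow (nbhd d (A i))). lam ^ (\<Sum>i<k. card (B i))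
        * x ^ card (\<Union>i<k. edges_between (A i) (B i)))"
  have Zb: "Z \<le> r ^ n"
    unfolding Z_def r_def n_def
  proof (rule abstract_bound[OF assms(1) _ x0 x1])
    show "0 \<le> lam" using assms(2) by simp
    show "\<And>i C. i < k \<Longrightarrow> C \<subseteq> nbhd d (A i) \<Longrightarrow> card C \<le> card (edges_between (A i) C)"
      using edges_card Apar by blast
  qed (auto intro: edges_finite finA finN simp: edges_union[symmetric])
  have pw: "poly_weight d k lam \<beta> A = lam ^ a / L ^ n * Z"
    unfolding poly_weight_def Z_def sum_distrib_left
  proof (intro sum.cong refl)
    fix B :: "nat \<Rightarrow> nat set set"
    have e: "(\<Sum>i<k. card (A i) + card (B i)) = a + (\<Sum>i<k. card (B i))"
      by (simp add: a_def sum.distrib)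
    show "lam ^ (\<Sum>i<k. card (A i) + card (B i)) / (1 + lam) ^ (\<Sum>i<k. card (nbhd d (A i))) *
          exp_neg \<beta> ^ card (\<Union>i<k. edges_between (A i) (B i)) =
          lam ^ a / L ^ n * (lam ^ (\<Sum>i<k. card (B i)) * x ^ card (\<Union>i<k. edges_between (A i) (B i)))"
      unfolding e power_add L_def[symmetric] n_def[symmetric] x_def[symmetric] by simp
  qed
  have al: "alpha_k k lam \<beta> = (1 + ((1+lam)^k - 1) * x) / L ^ k"
    unfolding alpha_k_def x_def L_def by simp
  have "alpha_k k lam \<beta> powr (1 / real k)
        = (1 + ((1+lam)^k - 1) * x) powr (1 / real k) / (L ^ k) powr (1 / real k)"
    unfolding al by (rule powr_divide)
  also have "(L ^ k) powr (1 / real k) = L" using Lpos assms(1) by (intro powr_k_inv) auto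
  finally have ar: "alpha_k k lam \<beta> powr (1 / real k) = r / L" unfolding r_def .
  have rhs: "lam ^ (\<Sum>i<k. card (A i)) * (alpha_k k lam \<beta> powr (1 / real k)) ^ n = lam ^ a / L ^ n * r ^ n"
    unfolding ar a_def power_divide by simp
  have "poly_weight d k lam \<beta> A \<le> lam ^ a / L ^ n * r ^ n"
    unfolding pw using Lpos assms(2) by (intro mult_left_mono Zb) simp
  then have "poly_weight d k lam \<beta> A \<le> lam ^ (\<Sum>i<k. card (A i)) * (alpha_k k lam \<beta> powr (1 / real k)) ^ n"
    using rhs by linarith
  then show ?thesis unfolding n_def .
qed

end
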